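(* Let $G$ be a finite $2$-connected graph, $T$ its Tutte's tree, and $\delta_G$ the spread of $G$. For every $n\ge2$, if the diameter of $T$ is greater than $4n\cdot\delta_G$, then $G$ contains at least $n$ parallel hinges.
   Context: Graphs are finite and undirected. A tree decomposition of $G$ is a pair $(T,(V_t))$ with $T$ a tree, $V_t\subseteq V_G$, $\bigcup_t V_t=V_G$, every edge inside some $V_t$, and $V_{t_1}\cap V_{t_3}\subseteq V_{t_2}$ whenever $t_2$ is on the $t_1$–$t_3$ path. The torso $\tau_t$ is $G[V_t]$ plus, for each $tt'\in E_T$, an edge joining the two vertices of $V_t\cap V_{t'}$. The Tutte decomposition of a $2$-connected graph is the unique tree decomposition with $|V_t\cap V_{t'}|=2$ for $tt'\in E_T$ whose torsos are $k$-bonds ($k\ge3$), $3$-connected graphs or cycles; $T$ is Tutte's tree. A $2$-separation is $(A,B)$ with $A\cup B=V_G$, $|A\cap B|=2$ and no edge between $A\setminus B$ and $B\setminus A$; $A\cap B$ is a hinge if $G[A]$ or $G[B]$ is $2$-connected. The spread of a vertex is the number of hinges containing it; $\delta_G$ is the maximum spread over all vertices. A sequence of hinges is parallel if the hinges are pairwise disjoint and there is a path $t_1\dots t_p$ in $T$ such that each hinge is contained in some $V_{t_j}$. *)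

theory Defs
  imports Main
begin

definition graph :: "'a set \<Rightarrow> 'a set set \<Rightarrow> bool" where
  "graph V E \<longleftrightarrow> finite V \<and> (\<forall>e\<in>E. e \<subseteq> V \<and> card e = 2)"

definition induced :: "'a set set \<Rightarrow> 'a set \<Rightarrow> 'a set set" where
  "induced E A = {e\<in>E. e \<subseteq> A}"

definition adj_rel :: "'a set set \<Rightarrow> ('a \<times> 'a) set" where
  "adj_rel E = {(x,y). {x,y} \<in> E}"

definition connected_graph :: "'a set \<Rightarrow> 'a set set \<Rightarrow> bool" where
  "connected_graph V E \<longleftrightarrow> V \<noteq> {} \<and> (\<forall>x\<in>V. \<forall>y\<in>V. (x,y) \<in> (adj_rel (induced E V))\<^sup>*)"

definition k_connected :: "nat \<Rightarrow> 'a set \<Rightarrow> 'a set set \<Rightarrow> bool" where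
  "k_connected k V E \<longleftrightarrow> finite V \<and> card V > k \<and>
     (\<forall>S. S \<subseteq> V \<and> card S < k \<longrightarrow> connected_graph (V - S) (induced E (V - S)))"

abbreviation two_connected :: "'a set \<Rightarrow> 'a set set \<Rightarrow> bool" where
  "two_connected \<equiv> k_connected 2"

abbreviation three_connected :: "'a set \<Rightarrow> 'a set set \<Rightarrow> bool" where
  "three_connected \<equiv> k_connected 3"

definition cycle_graph :: "'a set \<Rightarrow> 'a set set \<Rightarrow> bool" where
  "cycle_graph V E \<longleftrightarrow> finite V \<and> card V \<ge> 3 \<and> connected_graph V E \<and>
     (\<forall>v\<in>V. card {e\<in>E. v \<in> e} = 2)"

definition tree :: "'b set \<Rightarrow> 'b set set \<Rightarrow> bool" where
  "tree N ET \<longleftrightarrow> graph N ET \<and> connected_graph N ET \<and> card ET + 1 = card N"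

definition is_path :: "'b set \<Rightarrow> 'b set set \<Rightarrow> 'b list \<Rightarrow> bool" where
  "is_path N ET ps \<longleftrightarrow> ps \<noteq> [] \<and> distinct ps \<and> set ps \<subseteq> N \<and>
     (\<forall>i. Suc i < length ps \<longrightarrow> {ps ! i, ps ! Suc i} \<in> ET)"

definition tree_dist :: "'b set \<Rightarrow> 'b set set \<Rightarrow> 'b \<Rightarrow> 'b \<Rightarrow> nat" where
  "tree_dist N ET s t = (LEAST k. \<exists>ps. is_path N ET ps \<and> hd ps = s \<and> last ps = t \<and> length ps = Suc k)"

definition diameter :: "'b set \<Rightarrow> 'b set set \<Rightarrow> nat" where
  "diameter N ET = Max {tree_dist N ET s t | s t. s \<in> N \<and> t \<in> N}"

definition tree_decomposition :: "'a set \<Rightarrow> 'a set set \<Rightarrow> 'b set \<Rightarrow> 'b set set \<Rightarrow> ('b \<Rightarrow> 'a set) \<Rightarrow> bool" where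
  "tree_decomposition V E N ET Vb \<longleftrightarrow> tree N ET \<and> (\<forall>t\<in>N. Vb t \<subseteq> V) \<and>
     (\<Union>t\<in>N. Vb t) = V \<and> (\<forall>e\<in>E. \<exists>t\<in>N. e \<subseteq> Vb t) \<and>
     (\<forall>ps. is_path N ET ps \<longrightarrow> (\<forall>t\<in>set ps. Vb (hd ps) \<inter> Vb (last ps) \<subseteq> Vb t))"

text \<open>Multiplicity of the pair p in the torso at t (multigraph torso): one virtual edge for
  each tree edge at t whose adhesion set is p, plus the real edge p if it is assigned (by beta) to t.\<close>
definition torso_mult :: "'a set set \<Rightarrow> 'b set set \<Rightarrow> ('b \<Rightarrow> 'a set) \<Rightarrow> ('a set \<Rightarrow> 'b) \<Rightarrow> 'b \<Rightarrow> 'a set \<Rightarrow> nat" where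
  "torso_mult E ET Vb beta t p =
     card {t'. {t,t'} \<in> ET \<and> Vb t \<inter> Vb t' = p} + (if p \<in> E \<and> beta p = t then 1 else 0)"

definition torso_edges :: "'a set set \<Rightarrow> 'b set set \<Rightarrow> ('b \<Rightarrow> 'a set) \<Rightarrow> ('a set \<Rightarrow> 'b) \<Rightarrow> 'b \<Rightarrow> 'a set set" where
  "torso_edges E ET Vb beta t = {p. p \<subseteq> Vb t \<and> card p = 2 \<and> torso_mult E ET Vb beta t p \<ge> 1}"

definition torso_simple :: "'a set set \<Rightarrow> 'b set set \<Rightarrow> ('b \<Rightarrow> 'a set) \<Rightarrow> ('a set \<Rightarrow> 'b) \<Rightarrow> 'b \<Rightarrow> bool" where
  "torso_simple E ET Vb beta t \<longleftrightarrow> (\<forall>p. torso_mult E ET Vb beta t p \<le> 1)"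

definition is_bond :: "'a set set \<Rightarrow> 'b set set \<Rightarrow> ('b \<Rightarrow> 'a set) \<Rightarrow> ('a set \<Rightarrow> 'b) \<Rightarrow> 'b \<Rightarrow> bool" where
  "is_bond E ET Vb beta t \<longleftrightarrow> card (Vb t) = 2 \<and> torso_mult E ET Vb beta t (Vb t) \<ge> 3"

definition is_cycle_torso :: "'a set set \<Rightarrow> 'b set set \<Rightarrow> ('b \<Rightarrow> 'a set) \<Rightarrow> ('a set \<Rightarrow> 'b) \<Rightarrow> 'b \<Rightarrow> bool" where
  "is_cycle_torso E ET Vb beta t \<longleftrightarrow> torso_simple E ET Vb beta t \<and>
     cycle_graph (Vb t) (torso_edges E ET Vb beta t)"

definition is_3conn_torso :: "'a set set \<Rightarrow> 'b set set \<Rightarrow> ('b \<Rightarrow> 'a set) \<Rightarrow> ('a set \<Rightarrow> 'b) \<Rightarrow> 'b \<Rightarrow> bool" where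
  "is_3conn_torso E ET Vb beta t \<longleftrightarrow> torso_simple E ET Vb beta t \<and>
     three_connected (Vb t) (torso_edges E ET Vb beta t)"

text \<open>The Tutte decomposition (SPQR form): adhesion 2, every real edge is assigned to one bag
  containing it, torsos are k-bonds (k \<ge> 3), cycles or 3-connected; no two adjacent bonds and
  no two adjacent cycles (these make it unique).\<close>
definition tutte_decomposition :: "'a set \<Rightarrow> 'a set set \<Rightarrow> 'b set \<Rightarrow> 'b set set \<Rightarrow> ('b \<Rightarrow> 'a set) \<Rightarrow> bool" where
  "tutte_decomposition V E N ET Vb \<longleftrightarrow> tree_decomposition V E N ET Vb \<and>
     (\<forall>t t'. {t,t'} \<in> ET \<longrightarrow> card (Vb t \<inter> Vb t') = 2) \<and>
     (\<exists>beta. (\<forall>e\<in>E. beta e \<in> N \<and> e \<subseteq> Vb (beta e)) \<and>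
        (\<forall>t\<in>N. is_bond E ET Vb beta t \<or> is_cycle_torso E ET Vb beta t \<or> is_3conn_torso E ET Vb beta t) \<and>
        (\<forall>t t'. {t,t'} \<in> ET \<longrightarrow> \<not> (is_bond E ET Vb beta t \<and> is_bond E ET Vb beta t')) \<and>
        (\<forall>t t'. {t,t'} \<in> ET \<longrightarrow> \<not> (is_cycle_torso E ET Vb beta t \<and> is_cycle_torso E ET Vb beta t')))"

definition sep2 :: "'a set \<Rightarrow> 'a set set \<Rightarrow> 'a set \<Rightarrow> 'a set \<Rightarrow> bool" where
  "sep2 V E A B \<longleftrightarrow> A \<union> B = V \<and> card (A \<inter> B) = 2 \<and> A - B \<noteq> {} \<and> B - A \<noteq> {} \<and>
     \<not> (\<exists>x\<in>A - B. \<exists>y\<in>B - A. {x,y} \<in> E)"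

definition hinge :: "'a set \<Rightarrow> 'a set set \<Rightarrow> 'a set \<Rightarrow> bool" where
  "hinge V E X \<longleftrightarrow> (\<exists>A B. sep2 V E A B \<and> A \<inter> B = X \<and>
     (two_connected A (induced E A) \<or> two_connected B (induced E B)))"

definition spread :: "'a set \<Rightarrow> 'a set set \<Rightarrow> 'a \<Rightarrow> nat" where
  "spread V E v = card {X. hinge V E X \<and> v \<in> X}"

definition max_spread :: "'a set \<Rightarrow> 'a set set \<Rightarrow> nat" where
  "max_spread V E = Max (spread V E ` V)"

definition has_parallel_hinges :: "'a set \<Rightarrow> 'a set set \<Rightarrow> 'b set \<Rightarrow> 'b set set \<Rightarrow> ('b \<Rightarrow> 'a set) \<Rightarrow> nat \<Rightarrow> bool" where
  "has_parallel_hinges V E N ET Vb n \<longleftrightarrow> (\<exists>H :: nat \<Rightarrow> 'a set.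
     (\<forall>i<n. hinge V E (H i)) \<and> (\<forall>i<n. \<forall>j<n. i \<noteq> j \<longrightarrow> H i \<inter> H j = {}) \<and>
     (\<exists>ps. is_path N ET ps \<and> (\<forall>i<n. \<exists>t\<in>set ps. H i \<subseteq> Vb t)))"

end

theory Submission
  imports Defs
begin


lemma adj_rel_sym: "sym (adj_rel F)"
  unfolding adj_rel_def sym_def by (simp add: insert_commute)

lemma adj_rtrancl_sym: "(x,y) \<in> (adj_rel F)\<^sup>* \<Longrightarrow> (y,x) \<in> (adj_rel F)\<^sup>*"
  by (rule symD[OF sym_rtrancl[OF adj_rel_sym]])

lemma adj_rel_mono: "F \<subseteq> G \<Longrightarrow> (adj_rel F)\<^sup>* \<subseteq> (adj_rel G)\<^sup>*"
  by (rule rtrancl_mono) (auto simp: adj_rel_def)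

lemma induced_mono: "W1 \<subseteq> W2 \<Longrightarrow> induced E W1 \<subseteq> induced E W2"
  unfolding induced_def by auto

lemma adj_induced_mono: "W1 \<subseteq> W2 \<Longrightarrow> (x,y) \<in> (adj_rel (induced E W1))\<^sup>* \<Longrightarrow> (x,y) \<in> (adj_rel (induced E W2))\<^sup>*"
  by (rule subsetD[OF adj_rel_mono[OF induced_mono]])

lemma induced_induced: "W \<subseteq> A \<Longrightarrow> induced (induced E A) W = induced E W"
  unfolding induced_def by auto

lemma sep_reach:
  assumes AB: "A \<union> B = V" and noe: "\<not> (\<exists>x\<in>A - B. \<exists>y\<in>B - A. {x,y} \<in> E)"
    and EV: "\<forall>e\<in>E. e \<subseteq> V"
    and path: "(x,y) \<in> (adj_rel (induced E W))\<^sup>*" and x: "x \<in> A - B" "x \<in> W"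
  shows "(\<exists>z\<in>A\<inter>B\<inter>W. (x,z) \<in> (adj_rel (induced E (W \<inter> A)))\<^sup>*) \<or> (y \<in> A - B \<and> (x,y) \<in> (adj_rel (induced E (W \<inter> A)))\<^sup>*)"
  using path
proof (induction rule: rtrancl_induct)
  case base then show ?case using x by auto
next
  case (step y y')
  from step.hyps(2) have e: "{y,y'} \<in> E" "{y,y'} \<subseteq> W" unfolding adj_rel_def induced_def by auto
  show ?case
  proof (cases "\<exists>z\<in>A\<inter>B\<inter>W. (x,z) \<in> (adj_rel (induced E (W \<inter> A)))\<^sup>*")
    case True then show ?thesis by blast
  next
    case False
    with step.IH have y: "y \<in> A - B" "(x,y) \<in> (adj_rel (induced E (W \<inter> A)))\<^sup>*" by auto
    have "y' \<in> V" using EV e by auto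
    have "y' \<in> A"
    proof (rule ccontr)
      assume "y' \<notin> A"
      then have "y' \<in> B - A" using \<open>y' \<in> V\<close> AB by auto
      then show False using noe y(1) e(1) by auto
    qed
    have st: "(y,y') \<in> adj_rel (induced E (W \<inter> A))" using e y \<open>y' \<in> A\<close> unfolding adj_rel_def induced_def by auto
    have "(x,y') \<in> (adj_rel (induced E (W \<inter> A)))\<^sup>*" using y(2) st by (rule rtrancl_into_rtrancl)
    then show ?thesis using \<open>y' \<in> A\<close> e by (cases "y' \<in> B") auto
  qed
qed

lemma conn_pair:
  assumes "two_connected V E" "S \<subseteq> V" "card S < 2" "x \<in> V - S" "y \<in> V - S"
  shows "(x,y) \<in> (adj_rel (induced E (V - S)))\<^sup>*"
proof -
  have "connected_graph (V - S) (induced E (V - S))" using assms(1-3) unfolding k_connected_def by auto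
  then show ?thesis using assms(4,5) unfolding connected_graph_def by (simp add: induced_induced)
qed

lemma sep_to_X:
  assumes G: "graph V E" "two_connected V E" and sp: "sep2 V E A B"
    and S: "S \<subseteq> V" "card S < 2" and x: "x \<in> A - S"
  shows "\<exists>z\<in>(A\<inter>B) - S. (x,z) \<in> (adj_rel (induced E (A - S)))\<^sup>*"
proof (cases "x \<in> B")
  case True then show ?thesis using x by auto
next
  case False
  have fV: "finite V" using G unfolding graph_def by auto
  have AV: "A \<subseteq> V" "B \<subseteq> V" using sp unfolding sep2_def by auto
  have "\<not> (A \<inter> B \<subseteq> S)"
  proof
    assume "A \<inter> B \<subseteq> S"
    then have "card (A \<inter> B) \<le> card S" using S fV by (meson card_mono finite_subset)
    then show False using sp S unfolding sep2_def by auto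
  qed
  then obtain y where y: "y \<in> A \<inter> B" "y \<notin> S" by auto
  have "(x,y) \<in> (adj_rel (induced E (V - S)))\<^sup>*"
    using conn_pair[OF G(2) S] x y AV by auto
  from sep_reach[OF _ _ _ this, of A B] sp G(1) x False AV
  have "(\<exists>z\<in>A\<inter>B\<inter>(V - S). (x,z) \<in> (adj_rel (induced E ((V - S) \<inter> A)))\<^sup>*)"
    using y unfolding sep2_def graph_def by auto
  moreover have "(V - S) \<inter> A = A - S" using AV by auto
  ultimately show ?thesis by auto
qed

lemma R_generic:
  assumes G: "graph V E" "two_connected V E" and sp: "sep2 V E A B"
    and X: "A \<inter> B = {u,v}" "u \<noteq> v"
  shows "(u,v) \<in> (adj_rel (induced E A))\<^sup>*"
proof -
  obtain x where x: "x \<in> A - B" using sp unfolding sep2_def by auto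
  have uv: "u \<in> V" "v \<in> V" using X sp unfolding sep2_def by auto
  from sep_to_X[OF G sp, of "{u}" x] x uv X
  have 1: "(x,v) \<in> (adj_rel (induced E (A - {u})))\<^sup>*" by auto
  from sep_to_X[OF G sp, of "{v}" x] x uv X
  have 2: "(x,u) \<in> (adj_rel (induced E (A - {v})))\<^sup>*" by auto
  have "(x,v) \<in> (adj_rel (induced E A))\<^sup>*" by (rule adj_induced_mono[OF _ 1]) auto
  moreover have "(x,u) \<in> (adj_rel (induced E A))\<^sup>*" by (rule adj_induced_mono[OF _ 2]) auto
  then have "(u,x) \<in> (adj_rel (induced E A))\<^sup>*" by (rule adj_rtrancl_sym)
  ultimately show ?thesis by (meson rtrancl_trans)
qed

lemma two_conn_side:
  assumes G: "graph V E" "two_connected V E" and sp: "sep2 V E A B"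
    and X: "A \<inter> B = {u,v}" "u \<noteq> v"
    and H: "\<forall>w\<in>A - {u,v}. (u,v) \<in> (adj_rel (induced E (A - {w})))\<^sup>*"
  shows "two_connected A (induced E A)"
proof -
  have fV: "finite V" using G unfolding graph_def by auto
  have AV: "A \<subseteq> V" using sp unfolding sep2_def by auto
  have fA: "finite A" using fV AV finite_subset by blast
  obtain x0 where x0: "x0 \<in> A - B" using sp unfolding sep2_def by auto
  have sub: "{u,v,x0} \<subseteq> A" using X x0 by auto
  have "x0 \<noteq> u" "x0 \<noteq> v" using X x0 by auto
  then have c3: "card {u,v,x0} = 3" using X(2) by simp
  have "card {u,v,x0} \<le> card A" by (rule card_mono[OF fA sub])
  then have cA: "card A > 2" using c3 by simp
  have main: "connected_graph (A - S) (induced (induced E A) (A - S))" if S: "S \<subseteq> A" "card S < 2" for S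
  proof -
    have fS: "finite S" using fA S finite_subset by blast
    have SV: "S \<subseteq> V" using S AV by auto
    have cases: "S = {} \<or> (\<exists>w. S = {w})"
    proof (cases "card S = 0")
      case True then show ?thesis using fS by simp
    next
      case False then have "card S = Suc 0" using S(2) by simp
      then show ?thesis by (simp add: card_1_singleton_iff)
    qed
    have uvc: "(z1,z2) \<in> (adj_rel (induced E (A - S)))\<^sup>*" if z: "z1 \<in> {u,v} - S" "z2 \<in> {u,v} - S" for z1 z2
    proof (cases "z1 = z2")
      case True then show ?thesis by simp
    next
      case False
      then have SX: "S \<inter> {u,v} = {}" and zz: "{z1,z2} = {u,v}" using z X by auto
      have uv: "(u,v) \<in> (adj_rel (induced E (A - S)))\<^sup>*"
      proof (cases "S = {}")
        case True then show ?thesis using R_generic[OF G sp X] by simp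
      next
        case False
        then obtain w where w: "S = {w}" using cases by auto
        have "w \<in> A - {u,v}" using w S(1) SX by auto
        then show ?thesis using H w by simp
      qed
      from zz have "(z1=u \<and> z2=v) \<or> (z1=v \<and> z2=u)" by (auto simp: doubleton_eq_iff)
      then show ?thesis
      proof (elim disjE conjE)
        assume "z1 = u" "z2 = v" then show ?thesis using uv by simp
      next
        assume "z1 = v" "z2 = u" then show ?thesis using adj_rtrancl_sym[OF uv] by simp
      qed
    qed
    have "\<forall>x\<in>A - S. \<forall>y\<in>A - S. (x, y) \<in> (adj_rel (induced E (A - S)))\<^sup>*"
    proof (intro ballI)
      fix x y assume xy: "x \<in> A - S" "y \<in> A - S"
      obtain zx where zx: "zx \<in> (A\<inter>B) - S" "(x,zx) \<in> (adj_rel (induced E (A - S)))\<^sup>*"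
        using sep_to_X[OF G sp SV S(2) xy(1)] by auto
      obtain zy where zy: "zy \<in> (A\<inter>B) - S" "(y,zy) \<in> (adj_rel (induced E (A - S)))\<^sup>*"
        using sep_to_X[OF G sp SV S(2) xy(2)] by auto
      have "(zx,zy) \<in> (adj_rel (induced E (A - S)))\<^sup>*" by (rule uvc) (use zx zy X in auto)
      moreover have "(zy,y) \<in> (adj_rel (induced E (A - S)))\<^sup>*" by (rule adj_rtrancl_sym[OF zy(2)])
      ultimately show "(x, y) \<in> (adj_rel (induced E (A - S)))\<^sup>*"
        using zx(2) by (meson rtrancl_trans)
    qed
    moreover have "A - S \<noteq> {}"
    proof
      assume "A - S = {}"
      then have "A \<subseteq> S" by auto
      then have "card A \<le> card S" using card_mono[OF fS] by blast
      then show False using cA S by auto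
    qed
    ultimately show ?thesis unfolding connected_graph_def
      using induced_induced[of "A - S" A E] induced_induced[of "A - S" "A - S" E] by auto
  qed
  show ?thesis unfolding k_connected_def using fA cA main by auto
qed



fun lpath :: "'b set set \<Rightarrow> 'b list \<Rightarrow> bool" where
  "lpath F [] = False"
| "lpath F [x] = True"
| "lpath F (x#y#zs) = ({x,y} \<in> F \<and> lpath F (y#zs))"

lemma lpath_ne: "lpath F ps \<Longrightarrow> ps \<noteq> []" by (cases ps) auto

lemma lpath_Cons: "ps \<noteq> [] \<Longrightarrow> lpath F (x # ps) \<longleftrightarrow> {x, hd ps} \<in> F \<and> lpath F ps"
  by (cases ps) auto

lemma lpath_append: "lpath F xs \<Longrightarrow> lpath F ys \<Longrightarrow> {last xs, hd ys} \<in> F \<Longrightarrow> lpath F (xs @ ys)"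
proof (induction F xs rule: lpath.induct)
  case (1 F) then show ?case by simp
next
  case (2 F x) then show ?case using lpath_ne[of F ys] by (simp add: lpath_Cons)
next
  case (3 F x y zs) then show ?case by simp
qed

lemma lpath_suffix: "lpath F (xs @ ys) \<Longrightarrow> ys \<noteq> [] \<Longrightarrow> lpath F ys"
proof (induction xs)
  case Nil then show ?case by simp
next
  case (Cons a xs) then show ?case by (simp add: lpath_Cons)
qed

lemma lpath_mono: "lpath F ps \<Longrightarrow> F \<subseteq> G \<Longrightarrow> lpath G ps"
  by (induction F ps rule: lpath.induct) auto

lemma lpath_edges: "lpath F ps \<Longrightarrow> Suc i < length ps \<Longrightarrow> {ps!i, ps!Suc i} \<in> F"
proof (induction F ps arbitrary: i rule: lpath.induct)
  case (3 F x y zs) then show ?case by (cases i) auto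
qed auto

lemma lpath_reach: "lpath F ps \<Longrightarrow> (hd ps, last ps) \<in> (adj_rel F)\<^sup>*"
proof (induction F ps rule: lpath.induct)
  case (3 F x y zs)
  then have "(x,y) \<in> adj_rel F" by (simp add: adj_rel_def)
  then show ?case using 3 by (simp add: converse_rtrancl_into_rtrancl)
qed auto

lemma lpath_avoid: "lpath F ps \<Longrightarrow> a \<notin> set ps \<Longrightarrow> a \<in> e \<Longrightarrow> lpath (F - {e}) ps"
proof (induction F ps rule: lpath.induct)
  case (3 F x y zs)
  then have "{x,y} \<noteq> e" by auto
  then show ?case using 3 by simp
qed auto

lemma walk_to_path:
  assumes "(x,y) \<in> (adj_rel F)\<^sup>*"
  shows "\<exists>ps. lpath F ps \<and> distinct ps \<and> hd ps = x \<and> last ps = y \<and> set ps \<subseteq> {z. (x,z) \<in> (adj_rel F)\<^sup>*}"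
  using assms
proof (induction rule: converse_rtrancl_induct)
  case base then show ?case by (intro exI[of _ "[y]"]) auto
next
  case (step x x')
  then obtain ps where ps: "lpath F ps" "distinct ps" "hd ps = x'" "last ps = y"
    "set ps \<subseteq> {z. (x',z) \<in> (adj_rel F)\<^sup>*}" by auto
  have xx': "{x,x'} \<in> F" using step.hyps(1) by (simp add: adj_rel_def)
  have reach: "set ps \<subseteq> {z. (x,z) \<in> (adj_rel F)\<^sup>*}"
    using ps(5) step.hyps(1) by (auto intro: converse_rtrancl_into_rtrancl)
  show ?case
  proof (cases "x \<in> set ps")
    case True
    then obtain as bs where sp: "ps = as @ x # bs" using split_list by metis
    have "lpath F (x # bs)" by (rule lpath_suffix[of F as]) (use ps(1) sp in auto)
    moreover have "distinct (x # bs)" using ps(2) sp by simp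
    moreover have "last (x # bs) = y" using ps(4) sp by simp
    moreover have "set (x # bs) \<subseteq> {z. (x,z) \<in> (adj_rel F)\<^sup>*}" using reach sp by auto
    ultimately show ?thesis by (intro exI[of _ "x # bs"]) auto
  next
    case False
    have ne: "ps \<noteq> []" using lpath_ne ps(1) by blast
    have "lpath F (x # ps)" using ps(1,3) xx' ne by (simp add: lpath_Cons)
    moreover have "distinct (x # ps)" using ps(2) False by simp
    moreover have "last (x # ps) = y" using ps(4) ne by simp
    moreover have "set (x # ps) \<subseteq> {z. (x,z) \<in> (adj_rel F)\<^sup>*}" using reach by auto
    ultimately show ?thesis by (intro exI[of _ "x # ps"]) auto
  qed
qed

lemma lpath_is_path: "lpath F ps \<Longrightarrow> distinct ps \<Longrightarrow> set ps \<subseteq> N \<Longrightarrow> F \<subseteq> ET \<Longrightarrow> is_path N ET ps"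
proof -
  assume a: "lpath F ps" "distinct ps" "set ps \<subseteq> N" "F \<subseteq> ET"
  have "\<forall>i. Suc i < length ps \<longrightarrow> {ps ! i, ps ! Suc i} \<in> ET"
    using lpath_edges[OF a(1)] a(4) by blast
  then show ?thesis unfolding is_path_def using lpath_ne[OF a(1)] a by simp
qed

lemma conn_card:
  assumes fin: "finite N" and FN: "\<forall>e\<in>F. e \<subseteq> N" and r: "r \<in> N"
    and conn: "\<forall>x\<in>N. (x,r) \<in> (adj_rel F)\<^sup>*"
  shows "card N \<le> card F + 1"
proof -
  define d where "d x = (LEAST k. (x,r) \<in> (adj_rel F) ^^ k)" for x
  have dk: "(x,r) \<in> (adj_rel F) ^^ d x" if "x \<in> N" for x
  proof -
    have "(x,r) \<in> (adj_rel F)\<^sup>*" using conn that by simp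
    then have "\<exists>k. (x,r) \<in> (adj_rel F) ^^ k" by (rule rtrancl_imp_relpow)
    then show ?thesis unfolding d_def by (rule LeastI_ex)
  qed
  have par: "\<exists>p. {x,p} \<in> F \<and> d p < d x" if x: "x \<in> N - {r}" for x
  proof -
    have "d x \<noteq> 0"
    proof
      assume "d x = 0"
      then have "(x,r) \<in> (adj_rel F) ^^ 0" using dk[of x] x by simp
      then show False using x by simp
    qed
    then obtain m where m: "d x = Suc m" by (cases "d x") auto
    then have "(x,r) \<in> (adj_rel F) ^^ Suc m" using dk[of x] x by simp
    from relpow_Suc_D2[OF this] obtain p where p: "(x,p) \<in> adj_rel F" "(p,r) \<in> (adj_rel F)^^m" by auto
    have "d p \<le> m" unfolding d_def using p(2) by (rule Least_le)
    then show ?thesis using p(1) m by (auto simp: adj_rel_def)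
  qed
  define pa where "pa x = (SOME p. {x,p} \<in> F \<and> d p < d x)" for x
  have pa: "\<forall>x \<in> N - {r}. {x, pa x} \<in> F \<and> d (pa x) < d x"
  proof
    fix x assume "x \<in> N - {r}"
    from par[OF this] show "{x, pa x} \<in> F \<and> d (pa x) < d x" unfolding pa_def by (rule someI_ex)
  qed
  have "inj_on (\<lambda>x. {x, pa x}) (N - {r})"
  proof (rule inj_onI)
    fix x y assume xy: "x \<in> N - {r}" "y \<in> N - {r}" "{x, pa x} = {y, pa y}"
    show "x = y"
    proof (rule ccontr)
      assume "x \<noteq> y"
      have "x \<in> {y, pa y}" "y \<in> {x, pa x}" using xy(3) by (metis insertI1)+
      then have h: "x = pa y \<and> pa x = y" using \<open>x \<noteq> y\<close> by auto
      have "d (pa x) < d x" "d (pa y) < d y" using pa xy(1,2) by auto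
      with h show False by auto
    qed
  qed
  moreover have "(\<lambda>x. {x, pa x}) ` (N - {r}) \<subseteq> F" using pa by auto
  moreover have "finite F"
  proof -
    have "F \<subseteq> Pow N" using FN by auto
    then show ?thesis using fin by (simp add: finite_subset)
  qed
  ultimately have "card (N - {r}) \<le> card F" by (rule card_inj_on_le)
  then show ?thesis using r fin by simp
qed



locale tr =
  fixes N :: "'b set" and ET :: "'b set set"
  assumes tree: "tree N ET"
begin

lemma finN: "finite N" using tree unfolding tree_def graph_def by auto
lemma ET_sub: "e \<in> ET \<Longrightarrow> e \<subseteq> N" using tree unfolding tree_def graph_def by auto
lemma ET_card: "e \<in> ET \<Longrightarrow> card e = 2" using tree unfolding tree_def graph_def by auto
lemma cardET: "card ET + 1 = card N" using tree unfolding tree_def by auto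
lemma finET: "finite ET"
proof -
  have "ET \<subseteq> Pow N" using ET_sub by auto
  then show ?thesis using finN by (simp add: finite_subset)
qed
lemma induced_ET: "induced ET N = ET" using ET_sub unfolding induced_def by auto
lemma reach: "x \<in> N \<Longrightarrow> y \<in> N \<Longrightarrow> (x,y) \<in> (adj_rel ET)\<^sup>*"
  using tree unfolding tree_def connected_graph_def induced_ET by auto
lemma Nne: "N \<noteq> {}" using tree unfolding tree_def connected_graph_def by auto

lemma edge_neq: "{t,t'} \<in> ET \<Longrightarrow> t \<noteq> t'"
  using ET_card[of "{t,t'}"] by auto

lemma edge_N: "{t,t'} \<in> ET \<Longrightarrow> t \<in> N \<and> t' \<in> N"
  using ET_sub[of "{t,t'}"] by auto

definition C where "C t t' = {r. (t,r) \<in> (adj_rel (ET - {{t,t'}}))\<^sup>*}"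

lemma swap_edge: "ET - {{t',t}} = ET - {{t,t'}}" by (simp add: insert_commute)

lemma C_self: "t \<in> C t t'" unfolding C_def by simp

lemma bridge:
  assumes e: "{t,t'} \<in> ET" shows "t' \<notin> C t t'"
proof
  assume c: "t' \<in> C t t'"
  let ?F = "ET - {{t,t'}}"
  have tt: "(t,t') \<in> (adj_rel ?F)\<^sup>*" using c by (simp add: C_def)
  have "adj_rel ET \<subseteq> (adj_rel ?F)\<^sup>*"
  proof
    fix p assume "p \<in> adj_rel ET"
    then obtain a b where p: "p = (a,b)" "{a,b} \<in> ET" by (auto simp: adj_rel_def)
    show "p \<in> (adj_rel ?F)\<^sup>*"
    proof (cases "{a,b} = {t,t'}")
      case True
      then have "(a=t \<and> b=t') \<or> (a=t' \<and> b=t)" by (auto simp: doubleton_eq_iff)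
      then show ?thesis using tt adj_rtrancl_sym[OF tt] p by auto
    next
      case False then show ?thesis using p by (auto simp: adj_rel_def)
    qed
  qed
  then have sub: "(adj_rel ET)\<^sup>* \<subseteq> (adj_rel ?F)\<^sup>*" by (rule rtrancl_subset_rtrancl)
  have tN: "t \<in> N" using e ET_sub by auto
  have "card N \<le> card ?F + 1"
  proof (rule conn_card[OF finN _ tN])
    show "\<forall>e\<in>?F. e \<subseteq> N" using ET_sub by auto
    show "\<forall>x\<in>N. (x, t) \<in> (adj_rel ?F)\<^sup>*" using reach tN sub by auto
  qed
  moreover have "card ?F + 1 = card ET"
  proof -
    have c0: "0 < card ET" using e finET card_gt_0_iff by blast
    have "card ?F = card ET - 1" using e finET by (simp add: card_Diff_singleton)
    then show ?thesis using c0 by simp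
  qed
  ultimately show False using cardET by simp
qed

lemma C_N: assumes "t \<in> N" shows "C t t' \<subseteq> N"
proof
  fix r assume "r \<in> C t t'"
  then have "(t,r) \<in> (adj_rel (ET - {{t,t'}}))\<^sup>*" by (simp add: C_def)
  then show "r \<in> N"
  proof (induction rule: rtrancl_induct)
    case base then show ?case using assms by simp
  next
    case (step y z) then show ?case using ET_sub by (auto simp: adj_rel_def)
  qed
qed

lemma C_step: "r \<in> C t t' \<Longrightarrow> {r,z} \<in> ET \<Longrightarrow> {r,z} \<noteq> {t,t'} \<Longrightarrow> z \<in> C t t'"
  unfolding C_def by (auto simp: adj_rel_def intro: rtrancl_into_rtrancl)

lemma partition:
  assumes e: "{t,t'} \<in> ET" and r: "r \<in> N"
  shows "r \<in> C t t' \<or> r \<in> C t' t"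
proof -
  have tN: "t \<in> N" using e ET_sub by auto
  have "(t,r) \<in> (adj_rel ET)\<^sup>*" using reach tN r by simp
  then show ?thesis
  proof (induction rule: rtrancl_induct)
    case base then show ?case using C_self by auto
  next
    case (step y z)
    then have yz: "{y,z} \<in> ET" by (simp add: adj_rel_def)
    show ?case
    proof (cases "{y,z} = {t,t'}")
      case True
      then have "z = t \<or> z = t'" by (auto simp: doubleton_eq_iff)
      then show ?thesis using C_self by auto
    next
      case False
      have F2: "{y,z} \<noteq> {t',t}" using False by (simp add: insert_commute)
      from step.IH show ?thesis
      proof
        assume "y \<in> C t t'" then show ?thesis using C_step[OF _ yz False] by auto
      next
        assume "y \<in> C t' t" then show ?thesis using C_step[OF _ yz F2] by auto
      qed
    qed
  qed
qed

lemma disjoint: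
  assumes e: "{t,t'} \<in> ET" and r: "r \<in> C t t'" "r \<in> C t' t"
  shows False
proof -
  have 1: "(t,r) \<in> (adj_rel (ET - {{t,t'}}))\<^sup>*" using r(1) by (simp add: C_def)
  have 2: "(t',r) \<in> (adj_rel (ET - {{t,t'}}))\<^sup>*" using r(2) by (simp add: C_def swap_edge)
  have "(t,t') \<in> (adj_rel (ET - {{t,t'}}))\<^sup>*" using 1 adj_rtrancl_sym[OF 2] by (rule rtrancl_trans)
  then show False using bridge[OF e] by (simp add: C_def)
qed

lemma C_path:
  assumes e: "{t,t'} \<in> ET" and r: "r1 \<in> C t t'" "r2 \<in> C t' t"
  shows "\<exists>ps. is_path N ET ps \<and> hd ps = r1 \<and> last ps = r2 \<and> t \<in> set ps \<and> t' \<in> set ps"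
proof -
  let ?F = "ET - {{t,t'}}"
  have tN: "t \<in> N" "t' \<in> N" using e ET_sub by auto
  have 1: "(t,r1) \<in> (adj_rel ?F)\<^sup>*" using r(1) by (simp add: C_def)
  have 2: "(t',r2) \<in> (adj_rel ?F)\<^sup>*" using r(2) by (simp add: C_def swap_edge)
  obtain p1 where p1: "lpath ?F p1" "distinct p1" "hd p1 = r1" "last p1 = t"
    "set p1 \<subseteq> {z. (r1,z) \<in> (adj_rel ?F)\<^sup>*}"
    using walk_to_path[OF adj_rtrancl_sym[OF 1]] by blast
  obtain p2 where p2: "lpath ?F p2" "distinct p2" "hd p2 = t'" "last p2 = r2"
    "set p2 \<subseteq> {z. (t',z) \<in> (adj_rel ?F)\<^sup>*}"
    using walk_to_path[OF 2] by blast
  have s1: "set p1 \<subseteq> C t t'" using p1(5) 1 unfolding C_def by (auto intro: rtrancl_trans)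
  have s2: "set p2 \<subseteq> C t' t" using p2(5) unfolding C_def swap_edge by auto
  have disj: "set p1 \<inter> set p2 = {}" using s1 s2 disjoint[OF e] by blast
  have ne: "p1 \<noteq> []" "p2 \<noteq> []" using p1(1) p2(1) lpath_ne by blast+
  have lp: "lpath ET (p1 @ p2)"
    by (rule lpath_append) (use lpath_mono[OF p1(1)] lpath_mono[OF p2(1)] p1(4) p2(3) e in auto)
  have "set (p1 @ p2) \<subseteq> N" using s1 s2 C_N[OF tN(1), of t'] C_N[OF tN(2), of t] by auto
  then have "is_path N ET (p1 @ p2)"
    using lpath_is_path[OF lp] p1(2) p2(2) disj by auto
  moreover have "hd (p1 @ p2) = r1" "last (p1 @ p2) = r2" using ne p1(3) p2(4) by auto
  moreover have "t \<in> set (p1 @ p2)" "t' \<in> set (p1 @ p2)" using ne p1(4) p2(3)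
    by (auto intro: last_in_set hd_in_set)
  ultimately show ?thesis by blast
qed

lemma C_nested:
  assumes e1: "{s,t'} \<in> ET" and e2: "{s,t''} \<in> ET" and ne: "t'' \<noteq> t'"
  shows "C t'' s \<subseteq> C s t'"
proof
  fix r assume "r \<in> C t'' s"
  then have "(t'',r) \<in> (adj_rel (ET - {{t'',s}}))\<^sup>*" by (simp add: C_def)
  then show "r \<in> C s t'"
  proof (induction rule: rtrancl_induct)
    case base
    have "{s,t''} \<noteq> {s,t'}" using ne by (auto simp: doubleton_eq_iff)
    then show ?case using C_step[OF C_self e2] by simp
  next
    case (step y z)
    have yz: "{y,z} \<in> ET" using step.hyps(2) by (simp add: adj_rel_def)
    have yC: "y \<in> C t'' s" using step.hyps(1) by (simp add: C_def)
    have "{y,z} \<noteq> {s,t'}"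
    proof
      assume "{y,z} = {s,t'}"
      then have "y = s \<or> y = t'" by (auto simp: doubleton_eq_iff)
      then show False
      proof
        assume "y = s"
        then show False using yC bridge[of t'' s] e2 by (simp add: insert_commute)
      next
        assume "y = t'"
        then show False using step.IH bridge[OF e1] by simp
      qed
    qed
    then show ?case using C_step[OF step.IH yz] by simp
  qed
qed

lemma C_branch:
  assumes e: "{s,t'} \<in> ET" and r: "r \<in> C s t'" "r \<noteq> s"
  shows "\<exists>t''. {s,t''} \<in> ET \<and> t'' \<noteq> t' \<and> r \<in> C t'' s"
proof -
  let ?F = "ET - {{s,t'}}"
  have 1: "(s,r) \<in> (adj_rel ?F)\<^sup>*" using r(1) by (simp add: C_def)
  obtain ps where ps: "lpath ?F ps" "distinct ps" "hd ps = s" "last ps = r"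
    using walk_to_path[OF 1] by blast
  obtain t'' rest where sp: "ps = s # t'' # rest"
  proof (cases ps)
    case Nil then show ?thesis using ps(1) by simp
  next
    case (Cons a l)
    then show ?thesis
    proof (cases l)
      case Nil then show ?thesis using Cons ps r(2) by simp
    next
      case (Cons b l') then show ?thesis using \<open>ps = a # l\<close> ps(3) that by simp
    qed
  qed
  have st: "{s,t''} \<in> ?F" using ps(1) sp by simp
  have lp: "lpath ?F (t''#rest)" using ps(1) sp by simp
  have sn: "s \<notin> set (t''#rest)" using ps(2) sp by simp
  have "lpath (?F - {{t'',s}}) (t''#rest)" by (rule lpath_avoid[OF lp sn]) simp
  then have "lpath (ET - {{t'',s}}) (t''#rest)" by (rule lpath_mono) auto
  from lpath_reach[OF this] have "(t'', r) \<in> (adj_rel (ET - {{t'',s}}))\<^sup>*" using ps(4) sp by simp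
  then have "r \<in> C t'' s" by (simp add: C_def)
  moreover have "t'' \<noteq> t'" using st by auto
  ultimately show ?thesis using st by auto
qed

end


locale tut = tr N ET for N :: "'b set" and ET +
  fixes V :: "'a set" and E :: "'a set set" and Vb :: "'b \<Rightarrow> 'a set" and beta :: "'a set \<Rightarrow> 'b"
  assumes G: "graph V E" and G2: "two_connected V E"
    and td: "tree_decomposition V E N ET Vb"
    and adh: "\<forall>t t'. {t,t'} \<in> ET \<longrightarrow> card (Vb t \<inter> Vb t') = 2"
    and betaA: "\<forall>e\<in>E. beta e \<in> N \<and> e \<subseteq> Vb (beta e)"
    and types: "\<forall>t\<in>N. is_bond E ET Vb beta t \<or> is_cycle_torso E ET Vb beta t \<or> is_3conn_torso E ET Vb beta t"
    and nobb: "\<forall>t t'. {t,t'} \<in> ET \<longrightarrow> \<not> (is_bond E ET Vb beta t \<and> is_bond E ET Vb beta t')"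
    and nocc: "\<forall>t t'. {t,t'} \<in> ET \<longrightarrow> \<not> (is_cycle_torso E ET Vb beta t \<and> is_cycle_torso E ET Vb beta t')"
begin

abbreviation "bond \<equiv> is_bond E ET Vb beta"
abbreviation "cyc \<equiv> is_cycle_torso E ET Vb beta"
abbreviation "c3 \<equiv> is_3conn_torso E ET Vb beta"
abbreviation "tm \<equiv> torso_mult E ET Vb beta"

definition K where "K t p = {t'. {t,t'} \<in> ET \<and> Vb t \<inter> Vb t' = p}"

lemma tm_eq: "tm t p = card (K t p) + (if p \<in> E \<and> beta p = t then 1 else 0)"
  unfolding torso_mult_def K_def by simp

lemma K_fin: "finite (K t p)"
proof -
  have "K t p \<subseteq> N" unfolding K_def using ET_sub by auto
  then show ?thesis using finN finite_subset by blast
qed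

lemma finV: "finite V" using G unfolding graph_def by simp
lemma EV: "e \<in> E \<Longrightarrow> e \<subseteq> V" using G unfolding graph_def by simp
lemma Vb_V: "t \<in> N \<Longrightarrow> Vb t \<subseteq> V" using td unfolding tree_decomposition_def by auto
lemma cover: "(\<Union>t\<in>N. Vb t) = V" using td unfolding tree_decomposition_def by auto
lemma edge_cov: "e \<in> E \<Longrightarrow> \<exists>t\<in>N. e \<subseteq> Vb t" using td unfolding tree_decomposition_def by auto
lemma td_path: "is_path N ET ps \<Longrightarrow> t \<in> set ps \<Longrightarrow> Vb (hd ps) \<inter> Vb (last ps) \<subseteq> Vb t"
  using td unfolding tree_decomposition_def by blast
lemma adh2: "{t,t'} \<in> ET \<Longrightarrow> card (Vb t \<inter> Vb t') = 2" using adh by blast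
lemma finVb: "t \<in> N \<Longrightarrow> finite (Vb t)" using Vb_V finV finite_subset by blast

lemma bond_card: "bond t \<Longrightarrow> card (Vb t) = 2" unfolding is_bond_def by simp
lemma cyc_card: "cyc t \<Longrightarrow> card (Vb t) \<ge> 3" unfolding is_cycle_torso_def cycle_graph_def by simp
lemma c3_card: "c3 t \<Longrightarrow> card (Vb t) > 3" unfolding is_3conn_torso_def k_connected_def by simp
lemma simple_le: "cyc t \<or> c3 t \<Longrightarrow> tm t p \<le> 1"
  unfolding is_3conn_torso_def is_cycle_torso_def torso_simple_def by blast

lemma tm_ge2:
  assumes "{t,t1} \<in> ET" "{t,t2} \<in> ET" "t1 \<noteq> t2" "Vb t \<inter> Vb t1 = p" "Vb t \<inter> Vb t2 = p"
  shows "tm t p \<ge> 2"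
proof -
  have "{t1,t2} \<subseteq> K t p" using assms unfolding K_def by auto
  then have "card {t1,t2} \<le> card (K t p)" using K_fin card_mono by blast
  then show ?thesis using assms(3) unfolding tm_eq by simp
qed

lemma nonsimple_bond: "t \<in> N \<Longrightarrow> tm t p \<ge> 2 \<Longrightarrow> bond t"
  using types simple_le[of t p] by fastforce

definition side where "side t t' = (\<Union>r\<in>C t t'. Vb r)"

lemma sep_inter:
  assumes e: "{t,t'} \<in> ET" and r: "r1 \<in> C t t'" "r2 \<in> C t' t"
  shows "Vb r1 \<inter> Vb r2 \<subseteq> Vb t \<inter> Vb t'"
proof -
  obtain ps where ps: "is_path N ET ps" "hd ps = r1" "last ps = r2" "t \<in> set ps" "t' \<in> set ps"
    using C_path[OF e r] by blast
  show ?thesis using td_path[OF ps(1) ps(4)] td_path[OF ps(1) ps(5)] ps(2,3) by auto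
qed

lemma side_inter:
  assumes e: "{t,t'} \<in> ET"
  shows "side t t' \<inter> side t' t = Vb t \<inter> Vb t'"
proof
  show "side t t' \<inter> side t' t \<subseteq> Vb t \<inter> Vb t'"
    unfolding side_def using sep_inter[OF e] by blast
  show "Vb t \<inter> Vb t' \<subseteq> side t t' \<inter> side t' t"
    unfolding side_def using C_self[of t t'] C_self[of t' t] by blast
qed

lemma side_union:
  assumes e: "{t,t'} \<in> ET"
  shows "side t t' \<union> side t' t = V"
proof
  have tN: "t \<in> N" "t' \<in> N" using edge_N[OF e] by auto
  show "side t t' \<union> side t' t \<subseteq> V"
    unfolding side_def using C_N[OF tN(1), of t'] C_N[OF tN(2), of t] Vb_V by blast
  show "V \<subseteq> side t t' \<union> side t' t"
  proof
    fix x assume "x \<in> V"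
    then obtain r where r: "r \<in> N" "x \<in> Vb r" using cover by blast
    show "x \<in> side t t' \<union> side t' t"
      using partition[OF e r(1)] r(2) unfolding side_def by blast
  qed
qed

lemma side_noedge:
  assumes e: "{t,t'} \<in> ET"
  shows "\<not> (\<exists>x\<in>side t t' - side t' t. \<exists>y\<in>side t' t - side t t'. {x,y} \<in> E)"
proof
  assume "\<exists>x\<in>side t t' - side t' t. \<exists>y\<in>side t' t - side t t'. {x,y} \<in> E"
  then obtain x y where xy: "x \<in> side t t' - side t' t" "y \<in> side t' t - side t t'" "{x,y} \<in> E" by blast
  obtain r where r: "r \<in> N" "{x,y} \<subseteq> Vb r" using edge_cov[OF xy(3)] by blast
  from partition[OF e r(1)] show False
  proof
    assume "r \<in> C t t'" then have "y \<in> side t t'" using r(2) unfolding side_def by blast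
    then show False using xy(2) by simp
  next
    assume "r \<in> C t' t" then have "x \<in> side t' t" using r(2) unfolding side_def by blast
    then show False using xy(1) by simp
  qed
qed

lemma Vb_side: "Vb t \<subseteq> side t t'" unfolding side_def using C_self by blast

lemma side_nested:
  assumes "{s,t'} \<in> ET" "{s,t''} \<in> ET" "t'' \<noteq> t'"
  shows "side t'' s \<subseteq> side s t'"
  unfolding side_def using C_nested[OF assms] by blast

lemma side_disj:
  assumes e1: "{s,t1} \<in> ET" and e2: "{s,t2} \<in> ET" and ne: "t1 \<noteq> t2"
  shows "side t1 s \<inter> side t2 s \<subseteq> Vb s"
proof
  fix x assume x: "x \<in> side t1 s \<inter> side t2 s"
  then obtain r1 r2 where r: "r1 \<in> C t1 s" "r2 \<in> C t2 s" "x \<in> Vb r1" "x \<in> Vb r2"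
    unfolding side_def by blast
  have "r2 \<in> C s t1" using C_nested[OF e1 e2 ne[symmetric]] r(2) by blast
  moreover have e1': "{t1,s} \<in> ET" using e1 by (simp add: insert_commute)
  ultimately have "Vb r1 \<inter> Vb r2 \<subseteq> Vb t1 \<inter> Vb s" using sep_inter[OF e1' r(1)] by blast
  then show "x \<in> Vb s" using r by blast
qed

lemma side_Vb:
  assumes e: "{s,t''} \<in> ET"
  shows "side t'' s \<inter> Vb s \<subseteq> Vb s \<inter> Vb t''"
proof
  fix x assume x: "x \<in> side t'' s \<inter> Vb s"
  then obtain r where r: "r \<in> C t'' s" "x \<in> Vb r" unfolding side_def by blast
  have e': "{t'',s} \<in> ET" using e by (simp add: insert_commute)
  have "Vb r \<inter> Vb s \<subseteq> Vb t'' \<inter> Vb s" using sep_inter[OF e' r(1) C_self] .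
  then show "x \<in> Vb s \<inter> Vb t''" using x r by blast
qed

end


lemma kconn_pair:
  assumes "k_connected k Vs H" "S \<subseteq> Vs" "card S < k" "x \<in> Vs - S" "y \<in> Vs - S"
  shows "(x,y) \<in> (adj_rel (induced H (Vs - S)))\<^sup>*"
proof -
  have "connected_graph (Vs - S) (induced H (Vs - S))" using assms(1-3) unfolding k_connected_def by auto
  then show ?thesis using assms(4,5) unfolding connected_graph_def by (simp add: induced_induced)
qed

lemma lift_walk:
  assumes "\<And>a b. {a,b} \<in> H \<Longrightarrow> {a,b} \<subseteq> W \<Longrightarrow> (a,b) \<in> R\<^sup>*"
      and "(x,y) \<in> (adj_rel (induced H W))\<^sup>*"
  shows "(x,y) \<in> R\<^sup>*"
proof -
  have "adj_rel (induced H W) \<subseteq> R\<^sup>*" using assms(1) unfolding adj_rel_def induced_def by auto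
  then have "(adj_rel (induced H W))\<^sup>* \<subseteq> R\<^sup>*" by (rule rtrancl_subset_rtrancl)
  then show ?thesis using assms(2) by blast
qed

lemma card_not_sub: "card A \<ge> 3 \<Longrightarrow> card B = 2 \<Longrightarrow> \<exists>y\<in>A. y \<notin> B"
proof (rule ccontr)
  assume a: "card A \<ge> 3" "card B = 2" "\<not> (\<exists>y\<in>A. y \<notin> B)"
  then have "A \<subseteq> B" by blast
  moreover have "finite B" using a(2) card_gt_0_iff by fastforce
  ultimately have "card A \<le> card B" by (rule card_mono[rotated])
  then show False using a by simp
qed

lemma card2_neq: "card A = 2 \<Longrightarrow> card B = 2 \<Longrightarrow> A \<noteq> B \<Longrightarrow> \<exists>y\<in>A. y \<notin> B"
proof (rule ccontr)
  assume a: "card A = 2" "card B = 2" "A \<noteq> B" "\<not> (\<exists>y\<in>A. y \<notin> B)"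
  then have "A \<subseteq> B" by blast
  moreover have "finite B" using a(2) card_gt_0_iff by fastforce
  ultimately have "A = B" using card_subset_eq a by metis
  then show False using a by simp
qed

context tut begin

lemma nonbond_card: "t \<in> N \<Longrightarrow> \<not> bond t \<Longrightarrow> card (Vb t) \<ge> 3"
  using types cyc_card c3_card by fastforce

lemma bond_X:
  assumes b: "bond s" and e: "{s,t'} \<in> ET"
  shows "Vb s \<inter> Vb t' = Vb s"
proof -
  have sN: "s \<in> N" using edge_N[OF e] by simp
  have "card (Vb s \<inter> Vb t') = card (Vb s)" using adh2[OF e] bond_card[OF b] by simp
  then show ?thesis using finVb[OF sN] card_subset_eq[of "Vb s" "Vb s \<inter> Vb t'"] by blast
qed

lemma bond_other:
  assumes b: "bond s" and e: "{s,t'} \<in> ET"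
  shows "\<exists>t2. {s,t2} \<in> ET \<and> t2 \<noteq> t' \<and> Vb s \<inter> Vb t2 = Vb s"
proof -
  have X: "Vb s \<inter> Vb t' = Vb s" by (rule bond_X[OF b e])
  have "tm s (Vb s) \<ge> 3" using b unfolding is_bond_def by simp
  then have cK: "card (K s (Vb s)) \<ge> 2" unfolding tm_eq by (auto split: if_splits)
  have "\<not> K s (Vb s) \<subseteq> {t'}"
  proof
    assume "K s (Vb s) \<subseteq> {t'}"
    then have "card (K s (Vb s)) \<le> card {t'}" by (rule card_mono[rotated]) simp
    then show False using cK by simp
  qed
  then obtain t2 where "t2 \<in> K s (Vb s)" "t2 \<noteq> t'" by blast
  then show ?thesis unfolding K_def by blast
qed

lemma side_nonempty:
  assumes e: "{t,t'} \<in> ET" shows "side t t' - side t' t \<noteq> {}"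
proof -
  have tN: "t \<in> N" using edge_N[OF e] by simp
  have cX: "card (Vb t \<inter> Vb t') = 2" using adh2[OF e] .
  have key: "\<exists>y \<in> side t t'. y \<notin> Vb t \<inter> Vb t'"
  proof (cases "bond t")
    case False
    then have "card (Vb t) \<ge> 3" using nonbond_card tN by blast
    then obtain y where "y \<in> Vb t" "y \<notin> Vb t \<inter> Vb t'" using card_not_sub[OF _ cX] by blast
    then show ?thesis using Vb_side by blast
  next
    case True
    obtain t2 where t2: "{t,t2} \<in> ET" "t2 \<noteq> t'" using bond_other[OF True e] by blast
    have t2N: "t2 \<in> N" using edge_N[OF t2(1)] by simp
    have "\<not> bond t2" using nobb t2(1) True by blast
    then have "card (Vb t2) \<ge> 3" using nonbond_card t2N by blast
    then obtain y where y: "y \<in> Vb t2" "y \<notin> Vb t \<inter> Vb t'" using card_not_sub[OF _ cX] by blast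
    have "{t,t2} \<noteq> {t,t'}" using t2(2) by (auto simp: doubleton_eq_iff)
    then have "t2 \<in> C t t'" using C_step[OF C_self t2(1)] by simp
    then show ?thesis using y unfolding side_def by blast
  qed
  then obtain y where "y \<in> side t t'" "y \<notin> Vb t \<inter> Vb t'" by blast
  then show ?thesis using side_inter[OF e] by blast
qed

lemma edge_sep2: assumes e: "{t,t'} \<in> ET" shows "sep2 V E (side t t') (side t' t)"
proof -
  have e': "{t',t} \<in> ET" using e by (simp add: insert_commute)
  show ?thesis unfolding sep2_def
    using side_union[OF e] side_inter[OF e] adh2[OF e] side_nonempty[OF e] side_nonempty[OF e']
      side_noedge[OF e] by simp
qed

lemma R_edge:
  assumes e: "{s,t''} \<in> ET" and p: "Vb s \<inter> Vb t'' = {a,b}" "a \<noteq> b"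
  shows "(a,b) \<in> (adj_rel (induced E (side t'' s)))\<^sup>*"
proof -
  have e': "{t'',s} \<in> ET" using e by (simp add: insert_commute)
  have "side t'' s \<inter> side s t'' = {a,b}" using side_inter[OF e'] p by (simp add: Int_commute)
  then show ?thesis using R_generic[OF G G2 edge_sep2[OF e']] p(2) by blast
qed

lemma torso_edge_cases:
  assumes "p \<in> torso_edges E ET Vb beta s"
  shows "(p \<in> E \<and> beta p = s) \<or> (\<exists>t''. {s,t''} \<in> ET \<and> Vb s \<inter> Vb t'' = p)"
proof -
  have "tm s p \<ge> 1" using assms unfolding torso_edges_def by simp
  then have "(p \<in> E \<and> beta p = s) \<or> card (K s p) \<ge> 1" unfolding tm_eq by (auto split: if_splits)
  then show ?thesis
  proof
    assume "card (K s p) \<ge> 1"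
    then have "K s p \<noteq> {}" by auto
    then show ?thesis unfolding K_def by auto
  qed simp
qed

end


context tut begin

lemma good_c3:
  assumes e: "{s,t'} \<in> ET" and c: "c3 s" and X: "Vb s \<inter> Vb t' = {u,v}" "u \<noteq> v"
    and w: "w \<in> side s t' - {u,v}"
  shows "(u,v) \<in> (adj_rel (induced E (side s t' - {w})))\<^sup>*"
proof -
  let ?A = "side s t'"
  let ?H = "torso_edges E ET Vb beta s"
  let ?R = "adj_rel (induced E (?A - {w}))"
  have sN: "s \<in> N" using edge_N[OF e] by simp
  have simp1: "tm s p \<le> 1" for p using simple_le c by blast
  have tc: "three_connected (Vb s) ?H" using c unfolding is_3conn_torso_def by simp
  have uvs: "u \<in> Vb s" "v \<in> Vb s" using X by auto
  obtain c0 where c0: "c0 \<in> Vb s" "c0 \<notin> {u,v}"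
     and creal: "\<And>p. p \<subseteq> Vb s \<Longrightarrow> c0 \<notin> p \<Longrightarrow> w \<notin> p"
     and cvirt: "\<And>t''. {s,t''} \<in> ET \<Longrightarrow> c0 \<notin> Vb s \<inter> Vb t'' \<Longrightarrow> w \<notin> side t'' s"
  proof (cases "w \<in> Vb s")
    case True
    show ?thesis
    proof (rule that[of w])
      show "w \<in> Vb s" by fact
      show "w \<notin> {u,v}" using w by simp
      show "\<And>p. p \<subseteq> Vb s \<Longrightarrow> w \<notin> p \<Longrightarrow> w \<notin> p" by simp
      fix t'' assume t'': "{s,t''} \<in> ET" "w \<notin> Vb s \<inter> Vb t''"
      show "w \<notin> side t'' s" using side_Vb[OF t''(1)] True t''(2) by blast
    qed
  next
    case False
    obtain r where r: "r \<in> C s t'" "w \<in> Vb r" using w unfolding side_def by blast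
    have "r \<noteq> s" using r False by auto
    obtain t0 where t0: "{s,t0} \<in> ET" "t0 \<noteq> t'" "r \<in> C t0 s"
      using C_branch[OF e r(1) \<open>r \<noteq> s\<close>] by blast
    have wt0: "w \<in> side t0 s" using r t0 unfolding side_def by blast
    have neq: "Vb s \<inter> Vb t0 \<noteq> Vb s \<inter> Vb t'"
    proof
      assume eq: "Vb s \<inter> Vb t0 = Vb s \<inter> Vb t'"
      have "tm s (Vb s \<inter> Vb t') \<ge> 2" by (rule tm_ge2[OF t0(1) e t0(2)]) (use eq in auto)
      then show False using simp1[of "Vb s \<inter> Vb t'"] by simp
    qed
    obtain c1 where c1: "c1 \<in> Vb s \<inter> Vb t0" "c1 \<notin> Vb s \<inter> Vb t'"
      using card2_neq[OF adh2[OF t0(1)] adh2[OF e] neq] by blast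
    show ?thesis
    proof (rule that[of c1])
      show "c1 \<in> Vb s" "c1 \<notin> {u,v}" using c1 X by auto
      show "\<And>p. p \<subseteq> Vb s \<Longrightarrow> c1 \<notin> p \<Longrightarrow> w \<notin> p" using False by blast
      fix t'' assume t'': "{s,t''} \<in> ET" "c1 \<notin> Vb s \<inter> Vb t''"
      have "t'' \<noteq> t0" using t'' c1 by blast
      show "w \<notin> side t'' s" using side_disj[OF t0(1) t''(1) \<open>t''\<noteq>t0\<close>[symmetric]] wt0 False by blast
    qed
  qed
  have c3eq: "card {u,v,c0} = 3" using c0 X(2) by (auto simp: card_insert_if)
  have "\<not> Vb s \<subseteq> {u,v,c0}"
  proof
    assume "Vb s \<subseteq> {u,v,c0}"
    then have "card (Vb s) \<le> card {u,v,c0}" by (rule card_mono[rotated]) simp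
    then show False using c3_card[OF c] c3eq by simp
  qed
  then obtain z where z: "z \<in> Vb s" "z \<notin> {u,v,c0}" by blast
  have liftx: "(a,b) \<in> ?R\<^sup>*" if ab: "{a,b} \<in> ?H" "{a,b} \<subseteq> Vb s - {c0,x}" and x: "x \<in> {u,v}" for a b x
  proof -
    have pX: "{a,b} \<noteq> Vb s \<inter> Vb t'" using ab x X by auto
    have cp: "c0 \<notin> {a,b}" using ab by auto
    have ab2: "a \<noteq> b" using ab(1) unfolding torso_edges_def by auto
    from torso_edge_cases[OF ab(1)] show ?thesis
    proof
      assume "{a,b} \<in> E \<and> beta {a,b} = s"
      moreover have "w \<notin> {a,b}" using creal[of "{a,b}"] ab(2) cp by blast
      ultimately have "{a,b} \<in> induced E (?A - {w})"
        using ab(2) Vb_side[of s t'] unfolding induced_def by auto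
      then have "(a,b) \<in> ?R" unfolding adj_rel_def by simp
      then show ?thesis by simp
    next
      assume "\<exists>t''. {s,t''} \<in> ET \<and> Vb s \<inter> Vb t'' = {a,b}"
      then obtain t'' where t'': "{s,t''} \<in> ET" "Vb s \<inter> Vb t'' = {a,b}" by blast
      have "t'' \<noteq> t'" using t'' pX by auto
      have "w \<notin> side t'' s" using cvirt[OF t''(1)] t''(2) cp by simp
      then have sub: "side t'' s \<subseteq> ?A - {w}" using side_nested[OF e t''(1) \<open>t''\<noteq>t'\<close>] by auto
      have "(a,b) \<in> (adj_rel (induced E (side t'' s)))\<^sup>*" by (rule R_edge[OF t''(1) t''(2) ab2])
      then show ?thesis by (rule adj_induced_mono[OF sub])
    qed
  qed
  have S1: "{c0,v} \<subseteq> Vb s" "card {c0,v} < 3" using c0 uvs by (auto simp: card_insert_if)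
  have S2: "{c0,u} \<subseteq> Vb s" "card {c0,u} < 3" using c0 uvs by (auto simp: card_insert_if)
  have w1: "(u,z) \<in> (adj_rel (induced ?H (Vb s - {c0,v})))\<^sup>*"
    by (rule kconn_pair[OF tc S1]) (use uvs c0 X z in auto)
  have w2: "(z,v) \<in> (adj_rel (induced ?H (Vb s - {c0,u})))\<^sup>*"
    by (rule kconn_pair[OF tc S2]) (use uvs c0 X z in auto)
  have "(u,z) \<in> ?R\<^sup>*" by (rule lift_walk[OF _ w1]) (rule liftx[where x=v], auto)
  moreover have "(z,v) \<in> ?R\<^sup>*" by (rule lift_walk[OF _ w2]) (rule liftx[where x=u], auto)
  ultimately show ?thesis by (rule rtrancl_trans)
qed

lemma good_bond:
  assumes e: "{s,t'} \<in> ET" and b: "bond s" and X: "Vb s \<inter> Vb t' = {u,v}" "u \<noteq> v"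
    and w: "w \<in> side s t' - {u,v}"
  shows "(u,v) \<in> (adj_rel (induced E (side s t' - {w})))\<^sup>*"
proof -
  let ?A = "side s t'"
  have VX: "Vb s = {u,v}" using bond_X[OF b e] X by simp
  have ws: "w \<notin> Vb s" using w VX by auto
  have m: "tm s (Vb s) \<ge> 3" using b unfolding is_bond_def by simp
  show ?thesis
  proof (cases "Vb s \<in> E \<and> beta (Vb s) = s")
    case True
    have "{u,v} \<in> induced E (?A - {w})" using True VX Vb_side[of s t'] ws unfolding induced_def by auto
    then have "(u,v) \<in> adj_rel (induced E (?A - {w}))" unfolding adj_rel_def by simp
    then show ?thesis by simp
  next
    case False
    have cK: "card (K s (Vb s)) \<ge> 3" using m False unfolding tm_eq by auto
    have t'K: "t' \<in> K s (Vb s)" using e X VX unfolding K_def by auto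
    have c1: "card (K s (Vb s) - {t'}) \<ge> 2" using cK t'K K_fin by (simp add: card_Diff_singleton)
    have "K s (Vb s) - {t'} \<noteq> {}"
    proof
      assume "K s (Vb s) - {t'} = {}"
      then have "card (K s (Vb s) - {t'}) = 0" by (simp only: card.empty)
      with c1 show False by simp
    qed
    then obtain t1 where t1: "t1 \<in> K s (Vb s) - {t'}" by blast
    have "card (K s (Vb s) - {t'} - {t1}) \<ge> 1" using c1 t1 K_fin by (simp add: card_Diff_singleton)
    then have "K s (Vb s) - {t'} - {t1} \<noteq> {}"
    proof (intro notI)
      assume "K s (Vb s) - {t'} - {t1} = {}"
      then have "card (K s (Vb s) - {t'} - {t1}) = 0" by (simp only: card.empty)
      with \<open>card (K s (Vb s) - {t'} - {t1}) \<ge> 1\<close> show False by simp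
    qed
    then obtain t2 where t2: "t2 \<in> K s (Vb s) - {t'} - {t1}" by blast
    have e1: "{s,t1} \<in> ET" "Vb s \<inter> Vb t1 = {u,v}" using t1 VX unfolding K_def by auto
    have e2: "{s,t2} \<in> ET" "Vb s \<inter> Vb t2 = {u,v}" using t2 VX unfolding K_def by auto
    have "t1 \<noteq> t2" using t2 by auto
    have t12: "t1 \<noteq> t'" "t2 \<noteq> t'" using t1 t2 by auto
    have "\<exists>ti. {s,ti} \<in> ET \<and> Vb s \<inter> Vb ti = {u,v} \<and> ti \<noteq> t' \<and> w \<notin> side ti s"
    proof (cases "w \<in> side t1 s")
      case True
      have "w \<notin> side t2 s"
      proof
        assume "w \<in> side t2 s"
        then have "w \<in> Vb s" using True side_disj[OF e1(1) e2(1) \<open>t1 \<noteq> t2\<close>] by blast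
        then show False using ws by simp
      qed
      then show ?thesis using e2 t12 by blast
    next
      case False then show ?thesis using e1 t12 by blast
    qed
    then obtain ti where ti: "{s,ti} \<in> ET" "Vb s \<inter> Vb ti = {u,v}" "ti \<noteq> t'" "w \<notin> side ti s"
      by blast
    have pth: "(u,v) \<in> (adj_rel (induced E (side ti s)))\<^sup>*" by (rule R_edge[OF ti(1,2) X(2)])
    have sub: "side ti s \<subseteq> ?A - {w}" using side_nested[OF e ti(1) ti(3)] ti(4) by auto
    show ?thesis by (rule adj_induced_mono[OF sub pth])
  qed
qed

lemma hinge_dir:
  assumes e: "{s,t'} \<in> ET" and nc: "\<not> cyc s"
  shows "hinge V E (Vb s \<inter> Vb t')"
proof -
  have sN: "s \<in> N" using edge_N[OF e] by simp
  have bc: "bond s \<or> c3 s" using types sN nc by auto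
  have "\<exists>u v. Vb s \<inter> Vb t' = {u,v} \<and> u \<noteq> v" using adh2[OF e] by (simp only: card_2_iff)
  then obtain u v where X: "Vb s \<inter> Vb t' = {u,v}" "u \<noteq> v" by blast
  have sp: "sep2 V E (side s t') (side t' s)" by (rule edge_sep2[OF e])
  have int: "side s t' \<inter> side t' s = {u,v}" using side_inter[OF e] X by simp
  have "\<forall>w \<in> side s t' - {u,v}. (u,v) \<in> (adj_rel (induced E (side s t' - {w})))\<^sup>*"
  proof
    fix w assume w: "w \<in> side s t' - {u,v}"
    from bc show "(u,v) \<in> (adj_rel (induced E (side s t' - {w})))\<^sup>*"
    proof
      assume "bond s" then show ?thesis by (rule good_bond[OF e _ X w])
    next
      assume "c3 s" then show ?thesis by (rule good_c3[OF e _ X w])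
    qed
  qed
  then have "two_connected (side s t') (induced E (side s t'))" by (rule two_conn_side[OF G G2 sp int X(2)])
  then have "sep2 V E (side s t') (side t' s) \<and> side s t' \<inter> side t' s = Vb s \<inter> Vb t' \<and>
     (two_connected (side s t') (induced E (side s t')) \<or> two_connected (side t' s) (induced E (side t' s)))"
    using sp int X(1) by simp
  then show ?thesis unfolding hinge_def by blast
qed

lemma hinge_edge:
  assumes e: "{t,t'} \<in> ET" shows "hinge V E (Vb t \<inter> Vb t')"
proof (cases "cyc t")
  case False then show ?thesis by (rule hinge_dir[OF e])
next
  case True
  have e': "{t',t} \<in> ET" using e by (simp add: insert_commute)
  have "\<not> cyc t'" using nocc e True by auto
  from hinge_dir[OF e' this] show ?thesis by (simp add: Int_commute)
qed

end


lemma disjoint_select: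
  fixes H :: "'a set set"
  assumes "finite H" and "\<forall>Y\<in>H. card Y = 2"
    and "\<forall>v. card {Y\<in>H. v \<in> Y} \<le> d"
    and "card H > 2 * m * d"
  shows "\<exists>f. (\<forall>i<Suc m. f i \<in> H) \<and> (\<forall>i<Suc m. \<forall>j<Suc m. i \<noteq> j \<longrightarrow> f i \<inter> f j = {})"
  using assms
proof (induction m arbitrary: H)
  case 0
  then have "H \<noteq> {}" by auto
  then obtain Y where "Y \<in> H" by blast
  then show ?case by (intro exI[of _ "\<lambda>_. Y"]) auto
next
  case (Suc m)
  have fin: "finite H" using Suc.prems(1) .
  have "H \<noteq> {}" using Suc.prems(4) by auto
  then obtain Y where Y: "Y \<in> H" by blast
  have "card Y = 2" using Suc.prems(2) Y by blast
  then obtain u v where Yuv: "Y = {u,v}" by (auto simp: card_2_iff)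
  define H' where "H' = {Z \<in> H. Z \<inter> Y = {}}"
  have H'H: "H' \<subseteq> H" unfolding H'_def by auto
  have finH': "finite H'" using fin H'H finite_subset by blast
  have "H - H' \<subseteq> {Z\<in>H. u \<in> Z} \<union> {Z\<in>H. v \<in> Z}" unfolding H'_def using Yuv by auto
  then have "card (H - H') \<le> card ({Z\<in>H. u \<in> Z} \<union> {Z\<in>H. v \<in> Z})"
    by (rule card_mono[rotated]) (use fin in auto)
  also have "\<dots> \<le> card {Z\<in>H. u \<in> Z} + card {Z\<in>H. v \<in> Z}" by (rule card_Un_le)
  also have "\<dots> \<le> d + d" using Suc.prems(3) by (meson add_mono)
  finally have c1: "card (H - H') \<le> 2 * d" by simp
  have "card (H - H') = card H - card H'" using card_Diff_subset[OF finH' H'H] .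
  then have "card H' > 2 * m * d" using c1 Suc.prems(4) card_mono[OF fin H'H] by simp
  moreover have "\<forall>Z\<in>H'. card Z = 2" using Suc.prems(2) H'H by blast
  moreover have "\<forall>w. card {Z\<in>H'. w \<in> Z} \<le> d"
  proof
    fix w
    have "card {Z\<in>H'. w \<in> Z} \<le> card {Z\<in>H. w \<in> Z}" by (rule card_mono) (use fin H'H in auto)
    then show "card {Z\<in>H'. w \<in> Z} \<le> d" using Suc.prems(3) le_trans by blast
  qed
  ultimately obtain f where f: "\<forall>i<Suc m. f i \<in> H'" "\<forall>i<Suc m. \<forall>j<Suc m. i \<noteq> j \<longrightarrow> f i \<inter> f j = {}"
    using Suc.IH[OF finH'] by blast
  define g where "g = f(Suc m := Y)"
  have "\<forall>i<Suc (Suc m). g i \<in> H" using f(1) Y H'H unfolding g_def by auto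
  moreover have "\<forall>i<Suc (Suc m). \<forall>j<Suc (Suc m). i \<noteq> j \<longrightarrow> g i \<inter> g j = {}"
  proof (intro allI impI)
    fix i j assume ij: "i < Suc (Suc m)" "j < Suc (Suc m)" "i \<noteq> j"
    show "g i \<inter> g j = {}"
    proof (cases "i = Suc m")
      case True
      then have "j < Suc m" using ij by simp
      then have "f j \<inter> Y = {}" using f(1) unfolding H'_def by blast
      then show ?thesis using True ij(3) unfolding g_def by auto
    next
      case False
      then have i: "i < Suc m" using ij by simp
      show ?thesis
      proof (cases "j = Suc m")
        case True
        have "f i \<inter> Y = {}" using f(1) i unfolding H'_def by blast
        then show ?thesis using True False unfolding g_def by auto
      next
        case False
        then have "j < Suc m" using ij by simp
        then show ?thesis using f(2) i ij(3) \<open>i \<noteq> Suc m\<close> False unfolding g_def by auto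
      qed
    qed
  qed
  ultimately show ?case by blast
qed

context tr begin
lemma reach_N: "(x,y) \<in> (adj_rel ET)\<^sup>* \<Longrightarrow> x \<in> N \<Longrightarrow> y \<in> N"
proof (induction rule: rtrancl_induct)
  case (step y z) then show ?case using ET_sub by (auto simp: adj_rel_def)
qed simp

lemma path_exists:
  assumes "s \<in> N" "t \<in> N"
  shows "\<exists>ps. is_path N ET ps \<and> hd ps = s \<and> last ps = t"
proof -
  obtain ps where ps: "lpath ET ps" "distinct ps" "hd ps = s" "last ps = t"
    "set ps \<subseteq> {z. (s,z) \<in> (adj_rel ET)\<^sup>*}"
    using walk_to_path[OF reach[OF assms]] by blast
  have "set ps \<subseteq> N" using ps(5) reach_N assms(1) by blast
  then show ?thesis using lpath_is_path[OF ps(1,2)] ps(3,4) by blast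
qed
end

context tut begin

lemma seg:
  assumes p: "is_path N ET ps" and ik: "i \<le> k" "k \<le> j" "j < length ps"
  shows "Vb (ps!i) \<inter> Vb (ps!j) \<subseteq> Vb (ps!k)"
proof -
  define qs where "qs = take (Suc j - i) (drop i ps)"
  have len: "length qs = Suc j - i" using ik unfolding qs_def by simp
  have nth: "qs ! m = ps ! (i + m)" if "m < Suc j - i" for m using that ik unfolding qs_def by simp
  have pe: "{ps!m, ps!Suc m} \<in> ET" if "Suc m < length ps" for m using p that unfolding is_path_def by blast
  have qp: "is_path N ET qs"
    unfolding is_path_def
  proof (intro conjI allI impI)
    show "qs \<noteq> []" using len ik by auto
    show "distinct qs" using p unfolding qs_def is_path_def by simp
    have "set qs \<subseteq> set ps" unfolding qs_def by (meson set_drop_subset set_take_subset subset_trans)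
    then show "set qs \<subseteq> N" using p unfolding is_path_def by blast
  next
    fix m assume m: "Suc m < length qs"
    have "qs ! m = ps ! (i + m)" using nth m len by simp
    moreover have "qs ! Suc m = ps ! Suc (i + m)" using nth[of "Suc m"] m len by simp
    moreover have "Suc (i + m) < length ps" using m len ik by simp
    ultimately show "{qs ! m, qs ! Suc m} \<in> ET" using pe by simp
  qed
  have ne: "qs \<noteq> []" using len ik by auto
  have "hd qs = ps ! i" using hd_conv_nth[OF ne] nth[of 0] ik by simp
  moreover have "last qs = ps ! j" using last_conv_nth[OF ne] nth[of "j - i"] len ik by simp
  moreover have "ps ! k \<in> set qs"
  proof -
    have "qs ! (k - i) = ps ! k" using nth[of "k - i"] ik by simp
    moreover have "k - i < length qs" using len ik by simp
    ultimately show ?thesis by (metis nth_mem)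
  qed
  ultimately show ?thesis using td_path[OF qp] by metis
qed

lemma adh_repeat:
  assumes p: "is_path N ET ps" and ij: "i < j" "Suc j < length ps"
    and eq: "Vb (ps!i) \<inter> Vb (ps!Suc i) = Vb (ps!j) \<inter> Vb (ps!Suc j)"
  shows "j = Suc i"
proof (rule ccontr)
  assume "j \<noteq> Suc i"
  then have j2: "Suc (Suc i) \<le> j" using ij by simp
  define X where "X = Vb (ps!i) \<inter> Vb (ps!Suc i)"
  have edge: "{ps!m, ps!Suc m} \<in> ET" if "Suc m < length ps" for m using p that unfolding is_path_def by blast
  have XI: "X \<subseteq> Vb (ps!k)" if "i \<le> k" "k \<le> Suc j" for k
  proof -
    have "X \<subseteq> Vb (ps!i) \<inter> Vb (ps!Suc j)" using eq unfolding X_def by blast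
    also have "\<dots> \<subseteq> Vb (ps!k)" by (rule seg[OF p that ij(2)])
    finally show ?thesis .
  qed
  have cX: "card X = 2" unfolding X_def using adh2[OF edge[of i]] ij by simp
  have eqX: "Vb (ps!m) \<inter> Vb (ps!Suc m) = X" if "i \<le> m" "m \<le> j" for m
  proof -
    have s1: "X \<subseteq> Vb (ps!m)" by (rule XI) (use that in simp_all)
    have s2: "X \<subseteq> Vb (ps!Suc m)" by (rule XI) (use that in simp_all)
    have sub: "X \<subseteq> Vb (ps!m) \<inter> Vb (ps!Suc m)" using s1 s2 by (rule Int_greatest)
    have c: "card (Vb (ps!m) \<inter> Vb (ps!Suc m)) = 2" using adh2[OF edge[of m]] that ij by simp
    have "finite (Vb (ps!m) \<inter> Vb (ps!Suc m))" by (rule card_ge_0_finite) (simp add: c)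
    from card_subset_eq[OF this sub] show ?thesis using c cX by simp
  qed
  have dist: "distinct ps" using p unfolding is_path_def by simp
  have lt: "Suc (Suc (Suc i)) < length ps" using j2 ij by simp
  have d1: "ps ! i \<noteq> ps ! Suc (Suc i)" using dist lt by (simp add: nth_eq_iff_index_eq)
  have d2: "ps ! Suc i \<noteq> ps ! Suc (Suc (Suc i))" using dist lt by (simp add: nth_eq_iff_index_eq)
  have eA: "{ps ! Suc i, ps ! i} \<in> ET" using edge[of i] lt by (simp add: insert_commute)
  have eB: "{ps ! Suc i, ps ! Suc (Suc i)} \<in> ET" using edge[of "Suc i"] lt by simp
  have eC: "{ps ! Suc (Suc i), ps ! Suc i} \<in> ET" using eB by (simp add: insert_commute)
  have eD: "{ps ! Suc (Suc i), ps ! Suc (Suc (Suc i))} \<in> ET" using edge[of "Suc (Suc i)"] lt by simp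
  have x0: "Vb (ps ! Suc i) \<inter> Vb (ps ! i) = X" using eqX[of i] ij by (simp add: Int_commute)
  have x1: "Vb (ps ! Suc i) \<inter> Vb (ps ! Suc (Suc i)) = X" using eqX[of "Suc i"] j2 by simp
  have x1': "Vb (ps ! Suc (Suc i)) \<inter> Vb (ps ! Suc i) = X" using x1 by (simp add: Int_commute)
  have x2: "Vb (ps ! Suc (Suc i)) \<inter> Vb (ps ! Suc (Suc (Suc i))) = X" using eqX[of "Suc (Suc i)"] j2 by simp
  have n1: "ps ! Suc i \<in> N" using edge_N[OF eB] by simp
  have n2: "ps ! Suc (Suc i) \<in> N" using edge_N[OF eB] by simp
  have "bond (ps ! Suc i)" by (rule nonsimple_bond[OF n1 tm_ge2[OF eA eB d1 x0 x1]])
  moreover have "bond (ps ! Suc (Suc i))" by (rule nonsimple_bond[OF n2 tm_ge2[OF eC eD d2 x1' x2]])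
  ultimately show False using nobb eB by blast
qed

end


theorem mainTheorem15:
  fixes V :: "'a set" and E :: "'a set set"
    and N :: "'b set" and ET :: "'b set set" and Vb :: "'b \<Rightarrow> 'a set" and n :: nat
  assumes "graph V E"
    and "two_connected V E"
    and "tutte_decomposition V E N ET Vb"
    and "n \<ge> 2"
    and "diameter N ET > 4 * n * max_spread V E"
  shows "has_parallel_hinges V E N ET Vb n"
proof -
  from assms(3) obtain beta where
    td: "tree_decomposition V E N ET Vb"
    and adh: "\<forall>t t'. {t,t'} \<in> ET \<longrightarrow> card (Vb t \<inter> Vb t') = 2"
    and b1: "\<forall>e\<in>E. beta e \<in> N \<and> e \<subseteq> Vb (beta e)"
    and b2: "\<forall>t\<in>N. is_bond E ET Vb beta t \<or> is_cycle_torso E ET Vb beta t \<or> is_3conn_torso E ET Vb beta t"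
    and b3: "\<forall>t t'. {t,t'} \<in> ET \<longrightarrow> \<not> (is_bond E ET Vb beta t \<and> is_bond E ET Vb beta t')"
    and b4: "\<forall>t t'. {t,t'} \<in> ET \<longrightarrow> \<not> (is_cycle_torso E ET Vb beta t \<and> is_cycle_torso E ET Vb beta t')"
    unfolding tutte_decomposition_def by blast
  have trN: "tree N ET" using td unfolding tree_decomposition_def by simp
  interpret tut N ET V E Vb beta
    by unfold_locales (fact trN assms(1) assms(2) td adh b1 b2 b3 b4)+
  define D where "D = diameter N ET"
  define dl where "dl = max_spread V E"
  let ?S = "{tree_dist N ET s t | s t. s \<in> N \<and> t \<in> N}"
  have Seq: "?S = (\<lambda>(s,t). tree_dist N ET s t) ` (N \<times> N)" by auto
  have finS: "finite ?S" unfolding Seq using finN by simp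
  have neS: "?S \<noteq> {}" using Nne by auto
  have "D \<in> ?S" unfolding D_def diameter_def by (rule Max_in[OF finS neS])
  then obtain s t where st: "s \<in> N" "t \<in> N" "tree_dist N ET s t = D" by auto
  have ex: "\<exists>k. \<exists>ps. is_path N ET ps \<and> hd ps = s \<and> last ps = t \<and> length ps = Suc k"
  proof -
    obtain ps where p: "is_path N ET ps" "hd ps = s" "last ps = t" using path_exists[OF st(1,2)] by blast
    have "ps \<noteq> []" using p(1) unfolding is_path_def by simp
    then have "length ps = Suc (length ps - 1)" by simp
    then show ?thesis using p by blast
  qed
  have "\<exists>ps. is_path N ET ps \<and> hd ps = s \<and> last ps = t \<and> length ps = Suc (tree_dist N ET s t)"
    unfolding tree_dist_def by (rule LeastI_ex[OF ex])
  then obtain ps where ps: "is_path N ET ps" "length ps = Suc D" using st(3) by auto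
  define X where "X i = Vb (ps!i) \<inter> Vb (ps!Suc i)" for i
  have edge: "{ps!i, ps!Suc i} \<in> ET" if "i < D" for i using ps that unfolding is_path_def by simp
  have Xh: "hinge V E (X i)" if "i < D" for i unfolding X_def by (rule hinge_edge[OF edge[OF that]])
  define H where "H = X ` {..<D}"
  have finH: "finite H" unfolding H_def by simp
  have hV: "Y \<subseteq> V" if "hinge V E Y" for Y using that unfolding hinge_def sep2_def by blast
  have H2: "\<forall>Y\<in>H. card Y = 2" unfolding H_def X_def using adh2[OF edge] by auto
  have sb: "\<forall>v. card {Y\<in>H. v \<in> Y} \<le> dl"
  proof
    fix v
    show "card {Y\<in>H. v \<in> Y} \<le> dl"
    proof (cases "v \<in> V")
      case True
      have sub: "{Y\<in>H. v\<in>Y} \<subseteq> {Y. hinge V E Y \<and> v \<in> Y}" using Xh unfolding H_def by auto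
      have "{Y. hinge V E Y \<and> v \<in> Y} \<subseteq> Pow V" using hV by auto
      then have fin: "finite {Y. hinge V E Y \<and> v \<in> Y}" using finV finite_subset by blast
      have "card {Y\<in>H. v\<in>Y} \<le> spread V E v" unfolding spread_def by (rule card_mono[OF fin sub])
      also have "spread V E v \<le> dl" unfolding dl_def max_spread_def using True finV by simp
      finally show ?thesis .
    next
      case False
      have "{Y\<in>H. v\<in>Y} = {}" using False Xh hV unfolding H_def by auto
      then have "card {Y\<in>H. v\<in>Y} = 0" by (simp only: card.empty)
      then show ?thesis by simp
    qed
  qed
  define M where "M = Suc D div 2"
  have kD: "2*k < D" if "k < M" for k using that unfolding M_def by linarith
  have inj: "inj_on (\<lambda>k. X (2*k)) {..<M}"
  proof (rule inj_onI)
    fix k k' assume kk: "k \<in> {..<M}" "k' \<in> {..<M}" "X (2*k) = X (2*k')"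
    show "k = k'"
    proof (rule ccontr)
      assume "k \<noteq> k'"
      then consider "k < k'" | "k' < k" by linarith
      then show False
      proof cases
        case 1
        have "2*k' < D" using kD kk(2) by simp
        have "2*k' = Suc (2*k)"
          by (rule adh_repeat[OF ps(1)]) (use 1 \<open>2*k' < D\<close> ps(2) kk(3) in \<open>auto simp: X_def\<close>)
        then show False by presburger
      next
        case 2
        have "2*k < D" using kD kk(1) by simp
        have "2*k = Suc (2*k')"
          by (rule adh_repeat[OF ps(1)]) (use 2 \<open>2*k < D\<close> ps(2) kk(3) in \<open>auto simp: X_def\<close>)
        then show False by presburger
      qed
    qed
  qed
  have "(\<lambda>k. X (2*k)) ` {..<M} \<subseteq> H" unfolding H_def using kD by auto
  then have "card ((\<lambda>k. X (2*k)) ` {..<M}) \<le> card H" by (rule card_mono[OF finH])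
  then have cH: "M \<le> card H" using card_image[OF inj] by simp
  have DM: "D \<le> 2 * M" unfolding M_def by linarith
  define P where "P = n * dl"
  have "D > 4 * P" using assms(5) unfolding D_def dl_def P_def by (simp add: mult.assoc)
  moreover have "(n - 1) * dl \<le> P" unfolding P_def by (simp add: mult_le_mono1)
  ultimately have big: "card H > 2 * (n - 1) * dl" using DM cH by (simp add: mult.assoc)
  have n1: "Suc (n - 1) = n" using assms(4) by simp
  obtain f where f: "\<forall>i<n. f i \<in> H" "\<forall>i<n. \<forall>j<n. i \<noteq> j \<longrightarrow> f i \<inter> f j = {}"
    using disjoint_select[OF finH H2 sb big] unfolding n1 by blast
  have "\<forall>i<n. hinge V E (f i)" using f(1) Xh unfolding H_def by auto
  moreover have "\<forall>i<n. \<exists>t\<in>set ps. f i \<subseteq> Vb t"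
  proof (intro allI impI)
    fix i assume "i < n"
    then obtain j where j: "j < D" "f i = X j" using f(1) unfolding H_def by auto
    have "ps ! j \<in> set ps" using j ps(2) by simp
    moreover have "f i \<subseteq> Vb (ps ! j)" using j unfolding X_def by auto
    ultimately show "\<exists>t\<in>set ps. f i \<subseteq> Vb t" by blast
  qed
  ultimately show ?thesis unfolding has_parallel_hinges_def using f(2) ps(1) by blast
qed


end
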